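(* For every set $\Gamma\cup\{\varphi\}$ of formulas over $\Sigma^\circ$: if $\Gamma\vDash^{\mathsf{RN}}_{\mathcal{M}_{\bf mbCcl}}\varphi$ then $\Gamma\vdash_{\bf mbCcl}\varphi$.
   Context: $\Sigma^\circ$ has unary $\neg,\circ$ and binary $\wedge,\vee,\to$. ${\bf mbCcl}$ is the Hilbert calculus with Modus Ponens as only rule and axiom schemata: $\alpha\to(\beta\to\alpha)$; $(\alpha\to(\beta\to\gamma))\to((\alpha\to\beta)\to(\alpha\to\gamma))$; $\alpha\to(\beta\to(\alpha\wedge\beta))$; $(\alpha\wedge\beta)\to\alpha$; $(\alpha\wedge\beta)\to\beta$; $\alpha\to(\alpha\vee\beta)$; $\beta\to(\alpha\vee\beta)$; $(\alpha\to\gamma)\to((\beta\to\gamma)\to((\alpha\vee\beta)\to\gamma))$; $\alpha\vee\neg\alpha$; $\alpha\vee(\alpha\to\beta)$; $\circ\alpha\to(\alpha\to(\neg\alpha\to\beta))$; $\neg(\alpha\wedge\neg\alpha)\to\circ\alpha$. $\mathcal{A}_{\bf mbCcl}$ is the $\Sigma^\circ$-multialgebra with universe $\{F,t,T\}$, $D=\{t,T\}$, $U=\{F\}$: $x\tilde\vee y=U$ if $x=y=F$, else $D$; $x\tilde\wedge y=U$ if $F\in\{x,y\}$, else $D$; $\tilde\neg F=\tilde\neg t=D$, $\tilde\neg T=U$; $F\tilde\to y=D$, $x\tilde\to F=U$ for $x\in\{t,T\}$, $x\tilde\to y=D$ for $x,y\in\{t,T\}$; $\tilde\circ F=\tilde\circ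 T=D$, $\tilde\circ t=U$. A valuation is a map $\nu$ with $\nu(\#\alpha)\in\tilde\#\nu(\alpha)$ and $\nu(\alpha\#\beta)\in\nu(\alpha)\tilde\#\nu(\beta)$. $\mathcal{F}_{\bf mbCcl}$ is the set of valuations with $\nu(\alpha)=t\Rightarrow\nu(\alpha\wedge\neg\alpha)=T$ for all $\alpha$. $\Gamma\vDash^{\mathsf{RN}}_{\mathcal{M}_{\bf mbCcl}}\varphi$ iff every $\nu\in\mathcal{F}_{\bf mbCcl}$ with $\nu[\Gamma]\subseteq D$ has $\nu(\varphi)\in D$. *)

theory Defs
  imports Main
begin

datatype fm =
    Var nat
  | Neg fm
  | Circ fm
  | Conj fm fm
  | Disj fm fm
  | Imp fm fm

inductive mbCcl_axiom :: "fm \<Rightarrow> bool" where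
  ax1: "mbCcl_axiom (Imp a (Imp b a))"
| ax2: "mbCcl_axiom (Imp (Imp a (Imp b c)) (Imp (Imp a b) (Imp a c)))"
| ax3: "mbCcl_axiom (Imp a (Imp b (Conj a b)))"
| ax4: "mbCcl_axiom (Imp (Conj a b) a)"
| ax5: "mbCcl_axiom (Imp (Conj a b) b)"
| ax6: "mbCcl_axiom (Imp a (Disj a b))"
| ax7: "mbCcl_axiom (Imp b (Disj a b))"
| ax8: "mbCcl_axiom (Imp (Imp a c) (Imp (Imp b c) (Imp (Disj a b) c)))"
| ax9: "mbCcl_axiom (Disj a (Neg a))"
| ax10: "mbCcl_axiom (Disj a (Imp a b))"
| ax11: "mbCcl_axiom (Imp (Circ a) (Imp a (Imp (Neg a) b)))"
| ax12: "mbCcl_axiom (Imp (Neg (Conj a (Neg a))) (Circ a))"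

inductive mbCcl_derives :: "fm set \<Rightarrow> fm \<Rightarrow> bool" where
  prem: "\<phi> \<in> \<Gamma> \<Longrightarrow> mbCcl_derives \<Gamma> \<phi>"
| axiom: "mbCcl_axiom \<phi> \<Longrightarrow> mbCcl_derives \<Gamma> \<phi>"
| mp: "mbCcl_derives \<Gamma> \<alpha> \<Longrightarrow> mbCcl_derives \<Gamma> (Imp \<alpha> \<beta>) \<Longrightarrow> mbCcl_derives \<Gamma> \<beta>"

datatype tv = vF | vt | vT

definition Dset :: "tv set" where "Dset = {vt, vT}"
definition Uset :: "tv set" where "Uset = {vF}"

definition mor :: "tv \<Rightarrow> tv \<Rightarrow> tv set" where
  "mor x y = (if x = vF \<and> y = vF then Uset else Dset)"
definition mand :: "tv \<Rightarrow> tv \<Rightarrow> tv set" where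
  "mand x y = (if vF \<in> {x, y} then Uset else Dset)"
definition mneg :: "tv \<Rightarrow> tv set" where
  "mneg x = (if x = vT then Uset else Dset)"
definition mimp :: "tv \<Rightarrow> tv \<Rightarrow> tv set" where
  "mimp x y = (if x = vF then Dset else if y = vF then Uset else Dset)"
definition mcirc :: "tv \<Rightarrow> tv set" where
  "mcirc x = (if x = vt then Uset else Dset)"

definition valuation :: "(fm \<Rightarrow> tv) \<Rightarrow> bool" where
  "valuation v \<longleftrightarrow>
     (\<forall>a. v (Neg a) \<in> mneg (v a)) \<and>
     (\<forall>a. v (Circ a) \<in> mcirc (v a)) \<and>
     (\<forall>a b. v (Conj a b) \<in> mand (v a) (v b)) \<and>
     (\<forall>a b. v (Disj a b) \<in> mor (v a) (v b)) \<and>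
     (\<forall>a b. v (Imp a b) \<in> mimp (v a) (v b))"

definition F_mbCcl :: "(fm \<Rightarrow> tv) set" where
  "F_mbCcl = {v. valuation v \<and> (\<forall>a. v a = vt \<longrightarrow> v (Conj a (Neg a)) = vT)}"

definition RN_consequence :: "fm set \<Rightarrow> fm \<Rightarrow> bool" where
  "RN_consequence \<Gamma> \<phi> \<longleftrightarrow>
     (\<forall>v \<in> F_mbCcl. v ` \<Gamma> \<subseteq> Dset \<longrightarrow> v \<phi> \<in> Dset)"

end

theory Submission
  imports Defs
begin

abbreviation der (infix "\<turnstile>" 50) where "G \<turnstile> a \<equiv> mbCcl_derives G a"

lemma der_mono: "G \<turnstile> a \<Longrightarrow> G \<subseteq> H \<Longrightarrow> H \<turnstile> a"
  by (induction rule: mbCcl_derives.induct) (auto intro: mbCcl_derives.intros)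

lemma der_finite: "G \<turnstile> a \<Longrightarrow> \<exists>F. finite F \<and> F \<subseteq> G \<and> F \<turnstile> a"
proof (induction rule: mbCcl_derives.induct)
  case (prem \<phi> \<Gamma>) then show ?case by (intro exI[of _ "{\<phi>}"]) (auto intro: mbCcl_derives.intros)
next
  case (axiom \<phi> \<Gamma>) then show ?case by (intro exI[of _ "{}"]) (auto intro: mbCcl_derives.intros)
next
  case (mp \<Gamma> \<alpha> \<beta>)
  then obtain F1 F2 where "finite F1" "F1 \<subseteq> \<Gamma>" "F1 \<turnstile> \<alpha>" "finite F2" "F2 \<subseteq> \<Gamma>" "F2 \<turnstile> Imp \<alpha> \<beta>" by blast
  then show ?case
    by (intro exI[of _ "F1 \<union> F2"]) (auto intro: mbCcl_derives.mp der_mono)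
qed

lemma ax: "mbCcl_axiom a \<Longrightarrow> G \<turnstile> a" by (rule mbCcl_derives.axiom)
lemma mp2: "G \<turnstile> Imp a b \<Longrightarrow> G \<turnstile> a \<Longrightarrow> G \<turnstile> b" by (rule mbCcl_derives.mp)

lemma imp_self: "G \<turnstile> Imp a a"
proof -
  have 1: "G \<turnstile> Imp (Imp a (Imp (Imp a a) a)) (Imp (Imp a (Imp a a)) (Imp a a))" by (rule ax) (rule ax2)
  have 2: "G \<turnstile> Imp a (Imp (Imp a a) a)" by (rule ax) (rule ax1)
  have 3: "G \<turnstile> Imp a (Imp a a)" by (rule ax) (rule ax1)
  show ?thesis using mp2[OF mp2[OF 1 2] 3] .
qed

lemma deduction_aux: "H \<turnstile> b \<Longrightarrow> H = insert a G \<Longrightarrow> G \<turnstile> Imp a b"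
proof (induction rule: mbCcl_derives.induct)
  case (prem \<phi> \<Gamma>)
  show ?case
  proof (cases "\<phi> = a")
    case True then show ?thesis using imp_self by simp
  next
    case False
    then have "G \<turnstile> \<phi>" using prem by (auto intro: mbCcl_derives.prem)
    then show ?thesis by (rule mp2[rotated]) (rule ax, rule ax1)
  qed
next
  case (axiom \<phi> \<Gamma>)
  then show ?case by (intro mp2[OF ax[OF ax1]] ax)
next
  case (mp \<Gamma> \<alpha> \<beta>)
  then have "G \<turnstile> Imp a \<alpha>" "G \<turnstile> Imp a (Imp \<alpha> \<beta>)" by auto
  then show ?case by (meson ax ax2 mp2)
qed

lemma deduction: "insert a G \<turnstile> b \<Longrightarrow> G \<turnstile> Imp a b"
  using deduction_aux by blast

definition maxl :: "fm set \<Rightarrow> fm \<Rightarrow> bool" where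
  "maxl D p \<longleftrightarrow> \<not> D \<turnstile> p \<and> (\<forall>X. \<not> X \<turnstile> p \<longrightarrow> D \<subseteq> X \<longrightarrow> X = D)"

lemma maxl_notin: assumes "maxl D p" "a \<notin> D" shows "D \<turnstile> Imp a p"
proof -
  have "insert a D \<turnstile> p"
    using assms unfolding maxl_def by (metis insertI1 subset_insertI)
  then show ?thesis by (rule deduction)
qed

lemma maxl_closed: assumes "maxl D p" "D \<turnstile> a" shows "a \<in> D"
proof (rule ccontr)
  assume "a \<notin> D"
  then have "D \<turnstile> Imp a p" by (rule maxl_notin[OF assms(1)])
  then have "D \<turnstile> p" using assms(2) by (rule mp2)
  then show False using assms(1) unfolding maxl_def by blast
qed

lemma maxl_notp: "maxl D p \<Longrightarrow> \<not> D \<turnstile> p" unfolding maxl_def by blast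

lemma maxl_in: "maxl D p \<Longrightarrow> a \<in> D \<Longrightarrow> D \<turnstile> a" by (rule mbCcl_derives.prem)

lemma maxl_conj: assumes "maxl D p" shows "Conj a b \<in> D \<longleftrightarrow> a \<in> D \<and> b \<in> D"
proof
  assume "Conj a b \<in> D"
  then have "D \<turnstile> Conj a b" by (rule mbCcl_derives.prem)
  then show "a \<in> D \<and> b \<in> D" using assms by (meson ax ax4 ax5 mp2 maxl_closed)
next
  assume "a \<in> D \<and> b \<in> D"
  then show "Conj a b \<in> D" using assms by (meson ax ax3 mp2 maxl_closed maxl_in)
qed

lemma maxl_disj: assumes "maxl D p" shows "Disj a b \<in> D \<longleftrightarrow> a \<in> D \<or> b \<in> D"
proof
  assume d: "Disj a b \<in> D"
  show "a \<in> D \<or> b \<in> D"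
  proof (rule ccontr)
    assume "\<not> (a \<in> D \<or> b \<in> D)"
    then have "D \<turnstile> Imp a p" "D \<turnstile> Imp b p" using maxl_notin[OF assms] by auto
    then have "D \<turnstile> p" using d by (meson ax ax8 mp2 mbCcl_derives.prem)
    then show False using maxl_notp[OF assms] by blast
  qed
next
  assume "a \<in> D \<or> b \<in> D"
  then show "Disj a b \<in> D" using assms by (meson ax ax6 ax7 mp2 maxl_closed maxl_in)
qed

lemma maxl_imp: assumes "maxl D p" shows "Imp a b \<in> D \<longleftrightarrow> a \<notin> D \<or> b \<in> D"
proof
  assume "Imp a b \<in> D"
  then show "a \<notin> D \<or> b \<in> D" using assms by (meson mp2 maxl_closed maxl_in)
next
  assume h: "a \<notin> D \<or> b \<in> D"
  show "Imp a b \<in> D"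
  proof (cases "b \<in> D")
    case True then show ?thesis using assms by (meson ax ax1 mp2 maxl_closed maxl_in)
  next
    case False
    then have "a \<notin> D" using h by blast
    have "Disj a (Imp a b) \<in> D" using assms by (meson ax ax10 maxl_closed)
    then show ?thesis using maxl_disj[OF assms] \<open>a \<notin> D\<close> by blast
  qed
qed

lemma maxl_neg: assumes "maxl D p" "a \<notin> D" shows "Neg a \<in> D"
proof -
  have "Disj a (Neg a) \<in> D" using assms by (meson ax ax9 maxl_closed)
  then show ?thesis using maxl_disj[OF assms(1)] assms(2) by blast
qed

lemma maxl_circ_bad: assumes "maxl D p" "a \<in> D" "Neg a \<in> D" shows "Circ a \<notin> D"
proof
  assume "Circ a \<in> D"
  then have "D \<turnstile> p" using assms by (meson ax ax11 mp2 maxl_in)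
  then show False using maxl_notp[OF assms(1)] by blast
qed

lemma maxl_circ: assumes "maxl D p" "Neg (Conj a (Neg a)) \<in> D" shows "Circ a \<in> D"
  using assms by (meson ax ax12 mp2 maxl_closed maxl_in)

lemma lindenbaum: assumes "\<not> G \<turnstile> p" shows "\<exists>D. G \<subseteq> D \<and> maxl D p"
proof -
  let ?A = "{D. G \<subseteq> D \<and> \<not> D \<turnstile> p}"
  have "\<exists>M\<in>?A. \<forall>X\<in>?A. M \<subseteq> X \<longrightarrow> X = M"
  proof (rule subset_Zorn_nonempty)
    show "?A \<noteq> {}" using assms by blast
  next
    fix C assume C: "C \<noteq> {}" "subset.chain ?A C"
    have "\<not> \<Union>C \<turnstile> p"
    proof
      assume "\<Union>C \<turnstile> p"
      then obtain F where F: "finite F" "F \<subseteq> \<Union>C" "F \<turnstile> p" using der_finite by blast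
      then obtain B where "B \<in> C" "F \<subseteq> B" using finite_subset_Union_chain[OF F(1,2) C(1,2)] by blast
      then have "B \<turnstile> p" using der_mono F(3) by blast
      moreover have "B \<in> ?A" using \<open>B \<in> C\<close> C(2) unfolding subset.chain_def by blast
      ultimately show False by blast
    qed
    moreover have "G \<subseteq> \<Union>C" using C unfolding subset.chain_def by blast
    ultimately show "\<Union>C \<in> ?A" by blast
  qed
  then obtain M where M: "M \<in> ?A" "\<forall>X\<in>?A. M \<subseteq> X \<longrightarrow> X = M" by blast
  have "maxl M p" unfolding maxl_def using M by blast
  then show ?thesis using M by blast
qed

definition canon :: "fm set \<Rightarrow> fm \<Rightarrow> tv" where
  "canon D a = (if a \<notin> D then vF else if Neg a \<in> D then vt else vT)"

lemma canon_F: assumes "maxl D p" shows "canon D \<in> F_mbCcl"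
proof -
  note c = maxl_conj[OF assms] and d = maxl_disj[OF assms] and i = maxl_imp[OF assms]
   and n = maxl_neg[OF assms] and cb = maxl_circ_bad[OF assms] and ci = maxl_circ[OF assms]
  have v: "valuation (canon D)"
    unfolding valuation_def
  proof (intro conjI allI)
    fix a
    show "canon D (Neg a) \<in> mneg (canon D a)"
      unfolding canon_def mneg_def Dset_def Uset_def using n by auto
    show "canon D (Circ a) \<in> mcirc (canon D a)"
    proof (cases "a \<in> D \<and> Neg a \<in> D")
      case True then show ?thesis unfolding canon_def mcirc_def Dset_def Uset_def using cb by auto
    next
      case False
      then have "Conj a (Neg a) \<notin> D" using c by blast
      then have "Circ a \<in> D" using n ci by blast
      then show ?thesis using False unfolding canon_def mcirc_def Dset_def Uset_def by auto
    qed
  next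
    fix a b
    show "canon D (Conj a b) \<in> mand (canon D a) (canon D b)"
      unfolding canon_def mand_def Dset_def Uset_def using c by auto
    show "canon D (Disj a b) \<in> mor (canon D a) (canon D b)"
      unfolding canon_def mor_def Dset_def Uset_def using d by auto
    show "canon D (Imp a b) \<in> mimp (canon D a) (canon D b)"
      unfolding canon_def mimp_def Dset_def Uset_def using i by auto
  qed
  have r: "canon D (Conj a (Neg a)) = vT" if "canon D a = vt" for a
  proof -
    have h: "a \<in> D" "Neg a \<in> D" using that unfolding canon_def by (auto split: if_splits)
    then have "Conj a (Neg a) \<in> D" using c by blast
    moreover have "Neg (Conj a (Neg a)) \<notin> D" using h ci cb by blast
    ultimately show ?thesis unfolding canon_def by auto
  qed
  show ?thesis unfolding F_mbCcl_def using v r by blast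
qed

theorem mainTheorem4:
  fixes \<Gamma> :: "fm set" and \<phi> :: fm
  assumes "RN_consequence \<Gamma> \<phi>"
  shows "mbCcl_derives \<Gamma> \<phi>"
proof (rule ccontr)
  assume "\<not> mbCcl_derives \<Gamma> \<phi>"
  then obtain D where D: "\<Gamma> \<subseteq> D" "maxl D \<phi>" using lindenbaum by blast
  have "\<phi> \<notin> D" using D(2) maxl_notp maxl_in by blast
  then have "canon D \<phi> \<notin> Dset" unfolding canon_def Dset_def by auto
  moreover have "canon D ` \<Gamma> \<subseteq> Dset"
    using D(1) unfolding canon_def Dset_def by auto
  ultimately show False using assms canon_F[OF D(2)] unfolding RN_consequence_def by blast
qed

end
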